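(* Let $P, Q \subseteq \mathbb{R}^d$ be full-dimensional semi-rational polytopes and let $D \subseteq (0, \infty)$ be a dense subset such that $L_{P+w}(s) = L_{Q+w}(s)$ for all $w \in \mathbb{Z}^d$ and all $s \in D$. Then $P = Q$.
   Context: For a polytope $P \subseteq \mathbb{R}^d$ and real $s \ge 0$, $L_P(s) = \#(sP \cap \mathbb{Z}^d)$, where $sP = \{sx : x \in P\}$. A polytope is semi-rational if it can be written as $\bigcap_{i=1}^n \{x \in \mathbb{R}^d : \langle a_i, x\rangle \le b_i\}$ with all $a_i \in \mathbb{Z}^d$ and all $b_i \in \mathbb{R}$. *)

theory Defs
  imports "HOL-Analysis.Analysis"
begin

definition int_vec :: "(real ^ 'n) set" where
  "int_vec = {x. \<forall>i. x $ i \<in> \<int>}"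

definition lattice_count :: "(real ^ 'n) set \<Rightarrow> real \<Rightarrow> nat" where
  "lattice_count P s = card ((\<lambda>x. s *\<^sub>R x) ` P \<inter> int_vec)"

definition semi_rational :: "(real ^ 'n) set \<Rightarrow> bool" where
  "semi_rational P \<longleftrightarrow> polytope P \<and>
     (\<exists>H :: ((real ^ 'n) \<times> real) list. (\<forall>(a, b) \<in> set H. a \<in> int_vec) \<and>
        P = {x. \<forall>(a, b) \<in> set H. a \<bullet> x \<le> b})"

definition full_dimensional :: "(real ^ 'n) set \<Rightarrow> bool" where
  "full_dimensional P \<longleftrightarrow> aff_dim P = int CARD('n)"

end

theory Submission
  imports Defs
begin

lemma int_vec_dist:
  fixes x y :: "real ^ 'n"
  assumes "x \<in> int_vec" "y \<in> int_vec" "x \<noteq> y"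
  shows "1 \<le> dist x y"
proof -
  obtain i where i: "x$i \<noteq> y$i" using assms(3) vec_eq_iff by blast
  have "x$i - y$i \<in> \<int>" using assms(1,2) unfolding int_vec_def by auto
  then have "1 \<le> \<bar>x$i - y$i\<bar>" using i by (intro Ints_nonzero_abs_ge1) auto
  also have "\<dots> = \<bar>(x - y)$i\<bar>" by simp
  also have "\<dots> \<le> norm (x - y)" by (rule component_le_norm_cart)
  finally show ?thesis by (simp add: dist_norm)
qed

lemma subsing:
  fixes c :: "real ^ 'n"
  assumes "a \<in> int_vec \<inter> cball c e" "b \<in> int_vec \<inter> cball c e" "2 * e < 1"
  shows "a = b"
proof (rule ccontr)
  assume "a \<noteq> b"
  then have "1 \<le> dist a b" using assms int_vec_dist by blast
  moreover have "dist a b \<le> dist c a + dist c b" by (metis dist_commute dist_triangle)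
  ultimately show False using assms by auto
qed

lemma card_eq_sub:
  assumes "A \<subseteq> C" "B \<subseteq> C" "\<And>a b. a \<in> C \<Longrightarrow> b \<in> C \<Longrightarrow> a = b" "card A = card B"
  shows "A = B"
proof (cases "A = {}")
  case True
  have "B \<subseteq> {b. b \<in> C}" using assms by auto
  have fB: "finite B"
  proof (cases "B = {}")
    case False then obtain b where "b \<in> B" by auto
    then have "B \<subseteq> {b}" using assms(2,3) by blast
    then show ?thesis using finite_subset by blast
  qed simp
  then show ?thesis using True assms(4) by auto
next
  case False
  then obtain a where a: "a \<in> A" by auto
  then have "A \<subseteq> {a}" using assms(1,3) a by blast
  then have A: "A = {a}" using a by auto
  then have "card B = 1" using assms(4) by simp
  then obtain b where "B = {b}" using card_1_singletonE by blast
  then show ?thesis using A assms(1,2,3) a by blast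
qed

lemma mem_img:
  fixes P :: "(real ^ 'n) set"
  assumes "s \<noteq> 0"
  shows "z \<in> (\<lambda>x. s *\<^sub>R x) ` ((\<lambda>x. x + w) ` P) \<longleftrightarrow> (1/s) *\<^sub>R z - w \<in> P"
proof
  assume "z \<in> (\<lambda>x. s *\<^sub>R x) ` ((\<lambda>x. x + w) ` P)"
  then obtain p where "p \<in> P" "z = s *\<^sub>R (p + w)" by auto
  then show "(1/s) *\<^sub>R z - w \<in> P" using assms by simp
next
  assume h: "(1/s) *\<^sub>R z - w \<in> P"
  have "z = s *\<^sub>R (((1/s) *\<^sub>R z - w) + w)" using assms by simp
  then show "z \<in> (\<lambda>x. s *\<^sub>R x) ` ((\<lambda>x. x + w) ` P)" using h by blast
qed

lemma agree:
  fixes P Q :: "(real ^ 'n) set"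
  assumes PQ: "P \<union> Q \<subseteq> cball 0 R" and s: "0 < s" "2 * (s * R) < 1"
    and cnt: "\<And>w. w \<in> int_vec \<Longrightarrow>
           lattice_count ((\<lambda>x. x + w) ` P) s = lattice_count ((\<lambda>x. x + w) ` Q) s"
    and z: "z \<in> int_vec" and v: "v \<in> int_vec"
  shows "(1/s) *\<^sub>R z + v \<in> P \<longleftrightarrow> (1/s) *\<^sub>R z + v \<in> Q"
proof -
  define w where "w = - v"
  have w: "w \<in> int_vec" using v unfolding int_vec_def w_def by auto
  define A where "A = (\<lambda>x. s *\<^sub>R x) ` ((\<lambda>x. x + w) ` P) \<inter> int_vec"
  define B where "B = (\<lambda>x. s *\<^sub>R x) ` ((\<lambda>x. x + w) ` Q) \<inter> int_vec"
  define C where "C = int_vec \<inter> cball (s *\<^sub>R w) (s * R)"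
  have sub: "(\<lambda>x. s *\<^sub>R x) ` ((\<lambda>x. x + w) ` S) \<subseteq> cball (s *\<^sub>R w) (s * R)"
    if "S \<subseteq> cball 0 R" for S
  proof
    fix y assume "y \<in> (\<lambda>x. s *\<^sub>R x) ` ((\<lambda>x. x + w) ` S)"
    then obtain p where p: "p \<in> S" "y = s *\<^sub>R (p + w)" by auto
    have "dist (s *\<^sub>R w) y = norm (s *\<^sub>R p)" using p by (simp add: dist_norm algebra_simps)
    also have "\<dots> = s * norm p" using s by simp
    also have "\<dots> \<le> s * R" using p that s by (intro mult_left_mono) auto
    finally show "y \<in> cball (s *\<^sub>R w) (s * R)" by simp
  qed
  have "A \<subseteq> C" using sub[of P] PQ unfolding A_def C_def by auto
  moreover have "B \<subseteq> C" using sub[of Q] PQ unfolding B_def C_def by auto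
  moreover have "\<And>a b. a \<in> C \<Longrightarrow> b \<in> C \<Longrightarrow> a = b" unfolding C_def
    using subsing s by blast
  moreover have "card A = card B" using cnt[OF w] unfolding A_def B_def lattice_count_def .
  ultimately have "A = B" by (rule card_eq_sub)
  then have "z \<in> A \<longleftrightarrow> z \<in> B" by simp
  then show ?thesis using z mem_img[of s z w P] mem_img[of s z w Q] s
    unfolding A_def B_def w_def by auto
qed

lemma grid_dense:
  fixes x :: "real ^ 'n" and D :: "real set"
  assumes D: "{0<..} \<subseteq> closure D" and R: "0 \<le> R" and r: "0 < r"
  shows "\<exists>s\<in>D. 0 < s \<and> 2 * (s * R) < 1 \<and>
           (\<exists>z\<in>int_vec. \<exists>v\<in>int_vec. dist ((1/s) *\<^sub>R z + v) x < r)"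
proof -
  define n where "n = real CARD('n)"
  have n: "n > 0" unfolding n_def by simp
  define \<eta> where "\<eta> = r / (n + 1)"
  have eta: "\<eta> > 0" "n * \<eta> < r" unfolding \<eta>_def using n r by (auto simp: field_simps)
  define N :: nat where "N = nat \<lceil>2*R\<rceil> + 1"
  have N: "real N > 2 * R" "real N \<ge> 1" unfolding N_def using R by linarith+
  define a where "a = 1 / (real N + \<eta>)"
  define b where "b = 1 / real N"
  have ab: "0 < a" "a < b" unfolding a_def b_def using N eta by (auto simp: field_simps)
  define c where "c = (a + b) / 2"
  have "c \<in> closure D" using D ab unfolding c_def by auto
  then obtain s where s: "s \<in> D" "dist s c < (b - a) / 2"
    using ab closure_approachable[of c D] by (metis diff_gt_0_iff_gt half_gt_zero)
  have sab1: "a < s" using s(2) unfolding c_def dist_real_def by (auto simp: abs_less_iff field_simps)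
  have sab2: "s < b" using s(2) unfolding c_def dist_real_def by (auto simp: abs_less_iff field_simps)
  note sab = sab1 sab2
  then have s0: "0 < s" using ab by auto
  have "1/s < 1/a" using sab s0 ab by (simp add: divide_strict_left_mono)
  then have u1: "1/s < real N + \<eta>" unfolding a_def using N eta by simp
  have "1/b < 1/s" using sab s0 ab by (simp add: divide_strict_left_mono)
  then have u0: "real N < 1/s" unfolding b_def using N by simp
  define u where "u = 1/s - real N"
  have u: "0 < u" "u < \<eta>" unfolding u_def using u0 u1 by auto
  have "s * real N < 1" using sab N unfolding b_def by (simp add: field_simps)
  moreover have "s * (2 * R) \<le> s * real N" using N s0 by (intro mult_left_mono) auto
  ultimately have sR: "2 * (s * R) < 1" by simp
  define k where "k i = \<lfloor>x$i / u\<rfloor>" for i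
  define z :: "real ^ 'n" where "z = (\<chi> i. of_int (k i))"
  define v :: "real ^ 'n" where "v = (\<chi> i. - of_int (k i) * real N)"
  have zi: "z \<in> int_vec" unfolding z_def int_vec_def by auto
  have vi: "v \<in> int_vec" unfolding v_def int_vec_def by auto
  have comp: "((1/s) *\<^sub>R z + v) $ i = of_int (k i) * u" for i
    unfolding z_def v_def u_def by (simp add: algebra_simps)
  have bnd: "\<bar>((1/s) *\<^sub>R z + v - x) $ i\<bar> \<le> u" for i
  proof -
    have "of_int (k i) \<le> x$i / u" "x$i / u < of_int (k i) + 1" unfolding k_def by linarith+
    then have "of_int (k i) * u \<le> x$i" "x$i < of_int (k i) * u + u" using u
      by (auto simp: field_simps)
    then show ?thesis using comp[of i] by simp
  qed
  have "dist ((1/s) *\<^sub>R z + v) x \<le> (\<Sum>i\<in>UNIV. \<bar>((1/s) *\<^sub>R z + v - x) $ i\<bar>)"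
    unfolding dist_norm by (rule norm_le_l1_cart)
  also have "\<dots> \<le> (\<Sum>i\<in>(UNIV::'n set). u)" by (intro sum_mono bnd)
  also have "\<dots> = n * u" unfolding n_def by simp
  also have "\<dots> < r" using eta u n by (smt (verit) mult_strict_left_mono)
  finally show ?thesis using s s0 sR zi vi by blast
qed

lemma half_sub:
  fixes P Q :: "(real ^ 'n) set" and D :: "real set"
  assumes "semi_rational P" and "full_dimensional P"
    and "semi_rational Q"
    and "D \<subseteq> {0<..}" and D: "{0<..} \<subseteq> closure D"
    and cnt: "\<And>w s. w \<in> int_vec \<Longrightarrow> s \<in> D \<Longrightarrow>
           lattice_count ((\<lambda>x. x + w) ` P) s = lattice_count ((\<lambda>x. x + w) ` Q) s"
  shows "P \<subseteq> Q"
proof -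
  have pP: "polytope P" "polytope Q" using assms unfolding semi_rational_def by auto
  have cP: "compact P" "compact Q" "convex P" using pP polytope_imp_compact polytope_imp_convex by auto
  then have "bounded (P \<union> Q)" by (simp add: compact_imp_bounded)
  then obtain R where "\<forall>x\<in>P \<union> Q. norm x \<le> R" using bounded_pos by blast
  then have R: "P \<union> Q \<subseteq> cball 0 R" by auto
  have R0: "0 \<le> R"
  proof -
    have "P \<noteq> {}" using assms(2) unfolding full_dimensional_def by auto
    then obtain p where "p \<in> P" by auto
    then show ?thesis using R by (smt (verit) Un_iff mem_cball_0 norm_ge_zero subsetD)
  qed
  have ah: "affine hull P = UNIV" using assms(2) aff_dim_eq_full[of P]
    unfolding full_dimensional_def by simp
  have "P \<noteq> {}" using assms(2) unfolding full_dimensional_def by auto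
  then have intne: "interior P \<noteq> {}" using rel_interior_interior[OF ah] rel_interior_eq_empty cP
    by auto
  have iPQ: "interior P \<subseteq> Q"
  proof
    fix x assume x: "x \<in> interior P"
    show "x \<in> Q"
    proof (rule ccontr)
      assume xQ: "x \<notin> Q"
      have "open (interior P \<inter> - Q)" using cP by (intro open_Int open_interior open_Compl compact_imp_closed) auto
      then obtain r where r: "r > 0" "ball x r \<subseteq> interior P \<inter> - Q"
        using x xQ by (meson ComplI IntI open_contains_ball)
      obtain s z v where s: "s \<in> D" "0 < s" "2 * (s * R) < 1" "z \<in> int_vec" "v \<in> int_vec"
        "dist ((1/s) *\<^sub>R z + v) x < r"
        using grid_dense[OF D R0 r(1), of x] by blast
      have "(1/s) *\<^sub>R z + v \<in> ball x r" using s(6) by (simp add: dist_commute)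
      then have "(1/s) *\<^sub>R z + v \<in> P" "(1/s) *\<^sub>R z + v \<notin> Q"
        using r(2) interior_subset by blast+
      moreover have "(1/s) *\<^sub>R z + v \<in> P \<longleftrightarrow> (1/s) *\<^sub>R z + v \<in> Q"
        using agree[OF R s(2,3) _ s(4,5)] cnt s(1) by blast
      ultimately show False by blast
    qed
  qed
  have "P = closure (interior P)" using convex_closure_interior[OF cP(3) intne] cP
    by (simp add: compact_imp_closed)
  also have "\<dots> \<subseteq> Q" using iPQ cP by (simp add: closure_minimal compact_imp_closed)
  finally show ?thesis .
qed

theorem corollary4p4:
  fixes P Q :: "(real ^ 'n) set" and D :: "real set"
  assumes "semi_rational P" and "full_dimensional P"
    and "semi_rational Q" and "full_dimensional Q"
    and "D \<subseteq> {0<..}" and "{0<..} \<subseteq> closure D"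
    and "\<And>w s. w \<in> int_vec \<Longrightarrow> s \<in> D \<Longrightarrow>
           lattice_count ((\<lambda>x. x + w) ` P) s = lattice_count ((\<lambda>x. x + w) ` Q) s"
  shows "P = Q"
proof
  show "P \<subseteq> Q" using half_sub[of P Q D] assms by blast
  show "Q \<subseteq> P" using half_sub[of Q P D] assms by metis
qed

end
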